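(* Let $M\in\mathcal{F}$. Then there exist positive integers $n_1,\dots,n_k$ such that $M$ is the range of the cardinal function of the finite sequence $(n_1,\dots,n_k)$.
   Context: For a finite sequence $\mathbf{x}=(x_1,\dots,x_N)$ of positive reals, its achievement set is $\mathcal{A}(\mathbf{x})=\{\sum_{n\in A}x_n: A\subseteq\{1,\dots,N\}\}$ and its cardinal function $f_{\mathbf{x}}:\mathcal{A}(\mathbf{x})\to\mathbb{N}$ sends $x$ to the number of subsets $A\subseteq\{1,\dots,N\}$ with $\sum_{n\in A}x_n=x$ (terms with equal values at different positions are distinguished). $\mathcal{F}$ is the family of ranges of cardinal functions of finite sequences of positive reals. *)

theory Defs
  imports Complex_Main
begin

definition achievement_set :: "'a::comm_monoid_add list \<Rightarrow> 'a set" where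
  "achievement_set xs = {(\<Sum>n\<in>A. xs ! n) | A. A \<subseteq> {0..<length xs}}"

definition cardinal_fun :: "'a::comm_monoid_add list \<Rightarrow> 'a \<Rightarrow> nat" where
  "cardinal_fun xs x = card {A. A \<subseteq> {0..<length xs} \<and> (\<Sum>n\<in>A. xs ! n) = x}"

definition cardinal_range :: "'a::comm_monoid_add list \<Rightarrow> nat set" where
  "cardinal_range xs = cardinal_fun xs ` achievement_set xs"

definition family_F :: "nat set set" where
  "family_F = {cardinal_range xs | xs :: real list. \<forall>x\<in>set xs. x > 0}"

end

theory Submission
  imports Defs
begin

definition evf :: "nat \<Rightarrow> real \<times> (nat \<Rightarrow> real) \<Rightarrow> (nat \<Rightarrow> real) \<Rightarrow> real" where
  "evf N f z = fst f + (\<Sum>i<N. snd f i * z i)"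

definition ratf :: "real \<times> (nat \<Rightarrow> real) \<Rightarrow> bool" where
  "ratf f \<longleftrightarrow> fst f \<in> \<rat> \<and> (\<forall>i. snd f i \<in> \<rat>)"

lemma evf_upd: "evf N f (z(N := t)) = evf N f z"
  unfolding evf_def by (auto intro!: sum.cong)

lemma evf_Suc: "evf (Suc N) f z = evf N f z + snd f N * z N"
  unfolding evf_def by simp

lemma evf_rat: "ratf f \<Longrightarrow> (\<forall>i. z i \<in> \<rat>) \<Longrightarrow> evf N f z \<in> \<rat>"
  unfolding evf_def ratf_def by (auto intro!: Rats_add Rats_sum Rats_mult)

definition subf :: "real \<times> (nat \<Rightarrow> real) \<Rightarrow> nat \<Rightarrow> real \<times> (nat \<Rightarrow> real) \<Rightarrow> real \<times> (nat \<Rightarrow> real)" where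
  "subf e N f = (fst f - snd f N * fst e / snd e N, \<lambda>j. snd f j - snd f N * snd e j / snd e N)"

lemma evf_subf:
  assumes "snd e N \<noteq> 0"
  shows "evf N (subf e N f) z = evf (Suc N) f (z(N := - evf N e z / snd e N))"
proof -
  have "evf N (subf e N f) z = fst f + (\<Sum>i<N. snd f i * z i) - snd f N * (fst e + (\<Sum>i<N. snd e i * z i)) / snd e N"
    unfolding subf_def evf_def
    by (simp add: algebra_simps sum_subtractf sum_distrib_left sum_divide_distrib add_divide_distrib)
  also have "\<dots> = evf (Suc N) f (z(N := - evf N e z / snd e N))"
    unfolding evf_Suc evf_upd by (simp add: evf_def algebra_simps add_divide_distrib[symmetric])
  finally show ?thesis .
qed

lemma ratf_subf: "ratf e \<Longrightarrow> ratf f \<Longrightarrow> ratf (subf e N f)"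
  unfolding ratf_def subf_def by (auto intro!: Rats_diff Rats_mult Rats_divide)

definition shf :: "nat \<Rightarrow> real \<Rightarrow> real \<times> (nat \<Rightarrow> real) \<Rightarrow> real \<times> (nat \<Rightarrow> real)" where
  "shf N r f = (fst f + snd f N * r, snd f)"

lemma evf_shf: "evf N (shf N r f) z = evf (Suc N) f (z(N := r))"
  unfolding evf_Suc evf_upd by (simp add: evf_def shf_def)

lemma small_d:
  fixes v c :: "'a \<Rightarrow> real"
  shows "finite P \<Longrightarrow> (\<forall>f\<in>P. v f > 0) \<Longrightarrow> (\<forall>f\<in>P. c f \<ge> 0) \<Longrightarrow> \<exists>d>0. \<forall>f\<in>P. c f * d < v f"
proof (induction P rule: finite_induct)
  case empty
  then show ?case by (intro exI[of _ 1]) auto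
next
  case (insert g P)
  then obtain d where d: "d > 0" "\<forall>f\<in>P. c f * d < v f" by auto
  define d' where "d' = min d (v g / (1 + c g))"
  have d'pos: "d' > 0" using d insert.prems by (auto simp: d'_def)
  have "c g * d' < v g"
  proof -
    have "d' \<le> v g / (1 + c g)" by (simp add: d'_def)
    then have "d' * (1 + c g) \<le> v g / (1 + c g) * (1 + c g)"
      by (rule mult_right_mono) (use insert.prems in auto)
    then have "d' * (1 + c g) \<le> v g" using insert.prems by simp
    moreover have "d' > 0" by fact
    ultimately show ?thesis by (simp add: algebra_simps)
  qed
  moreover have "\<forall>f\<in>P. c f * d' < v f"
  proof
    fix f assume "f \<in> P"
    then have "c f * d' \<le> c f * d" using insert.prems by (auto simp: d'_def intro!: mult_left_mono)
    then show "c f * d' < v f" using d(2) \<open>f \<in> P\<close> by fastforce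
  qed
  ultimately show ?case using d'pos by auto
qed

lemma main_approx:
  "finite E \<Longrightarrow> finite P \<Longrightarrow> (\<forall>f\<in>E \<union> P. ratf f) \<Longrightarrow> (\<forall>f\<in>E. evf N f x = 0)
   \<Longrightarrow> (\<forall>f\<in>P. evf N f x > 0) \<Longrightarrow>
   \<exists>y. (\<forall>i. y i \<in> \<rat>) \<and> (\<forall>f\<in>E. evf N f y = 0) \<and> (\<forall>f\<in>P. evf N f y > 0)"
proof (induction N arbitrary: E P x)
  case 0
  then show ?case by (intro exI[of _ "\<lambda>_. 0"]) (simp add: evf_def)
next
  case (Suc N)
  show ?case
  proof (cases "\<exists>e\<in>E. snd e N \<noteq> 0")
    case True
    then obtain e where eE: "e \<in> E" and a: "snd e N \<noteq> 0" by blast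
    have xN: "x(N := - evf N e x / snd e N) = x"
    proof -
      have "evf N e x + snd e N * x N = 0" using Suc.prems(4) eE evf_Suc by metis
      then have "x N = - evf N e x / snd e N" using a by (simp add: field_simps)
      then show ?thesis by auto
    qed
    have ev': "evf N (subf e N f) x = evf (Suc N) f x" for f
      using evf_subf[OF a, of f x] xN by simp
    have "\<exists>y. (\<forall>i. y i \<in> \<rat>) \<and> (\<forall>f\<in>subf e N ` E. evf N f y = 0) \<and> (\<forall>f\<in>subf e N ` P. evf N f y > 0)"
    proof (rule Suc.IH[of _ _ x])
      show "\<forall>f\<in>subf e N ` E \<union> subf e N ` P. ratf f" using Suc.prems(3) eE ratf_subf by blast
    qed (use Suc.prems ev' in auto)
    then obtain y where y: "\<forall>i. y i \<in> \<rat>" "\<forall>f\<in>subf e N ` E. evf N f y = 0" "\<forall>f\<in>subf e N ` P. evf N f y > 0"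
      by blast
    define y' where "y' = y(N := - evf N e y / snd e N)"
    have "\<forall>i. y' i \<in> \<rat>"
      unfolding y'_def using y(1) evf_rat[of e y N] Suc.prems(3) eE by (auto simp: ratf_def intro!: Rats_divide Rats_minus_iff)
    moreover have "evf (Suc N) f y' = evf N (subf e N f) y" for f
      unfolding y'_def using evf_subf[OF a] by simp
    ultimately show ?thesis using y by (intro exI[of _ y']) auto
  next
    case False
    obtain d where d: "d > 0" "\<forall>f\<in>P. \<bar>snd f N\<bar> * d < evf (Suc N) f x"
      using small_d[OF Suc.prems(2), of "\<lambda>f. evf (Suc N) f x" "\<lambda>f. \<bar>snd f N\<bar>"] Suc.prems(5) by auto
    obtain r where r: "r \<in> \<rat>" "x N - d < r" "r < x N + d"
      using Rats_dense_in_real[of "x N - d" "x N + d"] d(1) by auto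
    have e1: "evf N (shf N r f) x = evf (Suc N) f x + snd f N * (r - x N)" for f
      unfolding evf_shf by (simp add: evf_Suc evf_upd algebra_simps)
    have "\<exists>y. (\<forall>i. y i \<in> \<rat>) \<and> (\<forall>f\<in>shf N r ` E. evf N f y = 0) \<and> (\<forall>f\<in>shf N r ` P. evf N f y > 0)"
    proof (rule Suc.IH[of _ _ x])
      show "\<forall>f\<in>shf N r ` E \<union> shf N r ` P. ratf f"
      proof
        fix g assume "g \<in> shf N r ` E \<union> shf N r ` P"
        then obtain f where f: "f \<in> E \<union> P" "g = shf N r f" by auto
        then have "ratf f" using Suc.prems(3) by blast
        then show "ratf g" using f(2) r(1) by (simp add: ratf_def shf_def Rats_add Rats_mult)
      qed
      show "\<forall>f\<in>shf N r ` E. evf N f x = 0" using False Suc.prems(4) e1 by auto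
      show "\<forall>f\<in>shf N r ` P. evf N f x > 0"
      proof
        fix g assume "g \<in> shf N r ` P"
        then obtain f where f: "f \<in> P" "g = shf N r f" by auto
        have "\<bar>snd f N * (r - x N)\<bar> \<le> \<bar>snd f N\<bar> * d"
          using r by (auto simp: abs_mult intro!: mult_left_mono)
        then show "evf N g x > 0" using d(2) f e1[of f] by auto
      qed
    qed (use Suc.prems in auto)
    then obtain y where y: "\<forall>i. y i \<in> \<rat>" "\<forall>f\<in>shf N r ` E. evf N f y = 0" "\<forall>f\<in>shf N r ` P. evf N f y > 0"
      by blast
    define y' where "y' = y(N := r)"
    have "\<forall>i. y' i \<in> \<rat>" unfolding y'_def using y(1) r(1) by auto
    moreover have "evf (Suc N) f y' = evf N (shf N r f) y" for f
      unfolding y'_def evf_shf ..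
    ultimately show ?thesis using y by (intro exI[of _ y']) auto
  qed
qed

lemma range_eq:
  fixes xs zs :: "real list"
  assumes len: "length xs = length zs"
    and eq: "\<And>A B. A \<subseteq> {0..<length xs} \<Longrightarrow> B \<subseteq> {0..<length xs} \<Longrightarrow>
          ((\<Sum>n\<in>A. xs ! n) = (\<Sum>n\<in>B. xs ! n)) = ((\<Sum>n\<in>A. zs ! n) = (\<Sum>n\<in>B. zs ! n))"
  shows "cardinal_range xs = cardinal_range zs"
proof -
  have cr: "cardinal_range ws = (\<lambda>A. cardinal_fun ws (\<Sum>n\<in>A. ws ! n)) ` {A. A \<subseteq> {0..<length ws}}"
    for ws :: "real list"
  proof -
    have "achievement_set ws = (\<lambda>A. \<Sum>n\<in>A. ws ! n) ` {A. A \<subseteq> {0..<length ws}}"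
      unfolding achievement_set_def by auto
    then show ?thesis unfolding cardinal_range_def by (simp add: image_image)
  qed
  have "cardinal_fun xs (\<Sum>n\<in>A. xs ! n) = cardinal_fun zs (\<Sum>n\<in>A. zs ! n)"
    if "A \<subseteq> {0..<length xs}" for A
    unfolding cardinal_fun_def using eq[OF _ that] len
    by (intro arg_cong[where f=card] Collect_cong) auto
  then show ?thesis unfolding cr len[symmetric] by (intro image_cong) auto
qed

lemma common_denom:
  "(\<forall>i<(L::nat). (y::nat\<Rightarrow>real) i \<in> \<rat>) \<Longrightarrow> \<exists>D::nat. D > 0 \<and> (\<forall>i<L. real D * y i \<in> \<int>)"
proof (induction L)
  case 0
  then show ?case by (intro exI[of _ 1]) auto
next
  case (Suc L)
  then obtain D :: nat where D: "D > 0" "\<forall>i<L. real D * y i \<in> \<int>" by auto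
  have "y L \<in> \<rat>" using Suc.prems by auto
  then obtain a b where ab: "b > 0" "y L = of_int a / of_int b" by (rule Rats_cases') auto
  define D' where "D' = D * nat b"
  have "D' > 0" using D ab by (simp add: D'_def)
  moreover have "\<forall>i<Suc L. real D' * y i \<in> \<int>"
  proof (intro allI impI)
    fix i assume i: "i < Suc L"
    show "real D' * y i \<in> \<int>"
    proof (cases "i = L")
      case True
      have "real D' * y i = of_int (int D * a)" using ab True by (simp add: D'_def)
      then show ?thesis by simp
    next
      case False
      then have "real D * y i \<in> \<int>" using D i by auto
      moreover have "real D' = of_int b * real D" using ab by (simp add: D'_def)
      ultimately show ?thesis by (simp add: mult.assoc Ints_mult)
    qed
  qed
  ultimately show ?case by blast
qed

definition dform :: "nat set \<Rightarrow> nat set \<Rightarrow> real \<times> (nat \<Rightarrow> real)" where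
  "dform A B = (0, \<lambda>i. (if i \<in> A then 1 else 0) - (if i \<in> B then 1 else 0))"

definition uform :: "nat \<Rightarrow> real \<times> (nat \<Rightarrow> real)" where
  "uform j = (0, \<lambda>i. if i = j then 1 else 0)"

lemma sum_ind: "A \<subseteq> {0..<L} \<Longrightarrow> (\<Sum>i<L. (if i \<in> A then 1 else 0) * (z::nat\<Rightarrow>real) i) = (\<Sum>i\<in>A. z i)"
proof -
  assume A: "A \<subseteq> {0..<L}"
  have "(\<Sum>i<L. (if i \<in> A then 1 else 0) * z i) = (\<Sum>i<L. if i \<in> A then z i else 0)"
    by (intro sum.cong) auto
  also have "\<dots> = sum z ({..<L} \<inter> A)" by (simp add: sum.inter_restrict)
  also have "{..<L} \<inter> A = A" using A by auto
  finally show ?thesis .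
qed

lemma evf_dform: "A \<subseteq> {0..<L} \<Longrightarrow> B \<subseteq> {0..<L} \<Longrightarrow> evf L (dform A B) z = (\<Sum>i\<in>A. z i) - (\<Sum>i\<in>B. z i)"
  unfolding evf_def dform_def by (simp add: left_diff_distrib sum_subtractf sum_ind)

lemma evf_uform: "j < L \<Longrightarrow> evf L (uform j) z = z j"
proof -
  assume j: "j < L"
  have "(\<Sum>i<L. (if i = j then 1 else 0) * z i) = (\<Sum>i<L. if i = j then z i else 0)"
    by (intro sum.cong) auto
  then show ?thesis using j by (simp add: evf_def uform_def)
qed

lemma ratf_dform: "ratf (dform A B)" unfolding ratf_def dform_def by auto
lemma ratf_uform: "ratf (uform j)" unfolding ratf_def uform_def by auto

theorem theorem8p1:
  assumes "M \<in> family_F"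
  shows "\<exists>ns :: nat list. (\<forall>n\<in>set ns. n > 0) \<and>
           M = cardinal_range (map real ns)"
proof -
  obtain xs :: "real list" where M: "M = cardinal_range xs" and pos: "\<forall>x\<in>set xs. x > 0"
    using assms unfolding family_F_def by auto
  define L where "L = length xs"
  define x where "x = (\<lambda>i. xs ! i)"
  define S where "S = (\<lambda>z A. \<Sum>i\<in>A. (z::nat\<Rightarrow>real) i)"
  define Pw where "Pw = Pow {0..<L}"
  define E where "E = {dform A B | A B. A \<in> Pw \<and> B \<in> Pw \<and> S x A = S x B}"
  define P where "P = {dform A B | A B. A \<in> Pw \<and> B \<in> Pw \<and> S x A > S x B} \<union> uform ` {0..<L}"
  have fin: "finite {dform A B | A B. A \<in> Pw \<and> B \<in> Pw \<and> Q A B}" for Q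
  proof -
    have "{dform A B | A B. A \<in> Pw \<and> B \<in> Pw \<and> Q A B} \<subseteq> (\<lambda>(A,B). dform A B) ` (Pw \<times> Pw)"
      by auto
    moreover have "finite Pw" by (simp add: Pw_def)
    ultimately show ?thesis by (meson finite_SigmaI finite_imageI finite_subset)
  qed
  have finE: "finite E" unfolding E_def by (rule fin)
  have finP: "finite P" unfolding P_def using fin[of "\<lambda>A B. S x A > S x B"] by simp
  have ratE: "\<forall>f\<in>E \<union> P. ratf f"
  proof
    fix f assume "f \<in> E \<union> P"
    then have "(\<exists>A B. f = dform A B) \<or> (\<exists>j. f = uform j)" unfolding E_def P_def by blast
    then show "ratf f" using ratf_dform ratf_uform by blast
  qed
  have xE: "\<forall>f\<in>E. evf L f x = 0"
  proof
    fix f assume "f \<in> E"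
    then obtain A B where AB: "f = dform A B" "A \<in> Pw" "B \<in> Pw" "S x A = S x B"
      unfolding E_def by blast
    then have "A \<subseteq> {0..<L}" "B \<subseteq> {0..<L}" by (auto simp: Pw_def)
    from evf_dform[OF this, of x] show "evf L f x = 0" using AB by (simp add: S_def)
  qed
  have xP: "\<forall>f\<in>P. evf L f x > 0"
  proof
    fix f assume "f \<in> P"
    then have "(\<exists>A B. f = dform A B \<and> A \<in> Pw \<and> B \<in> Pw \<and> S x A > S x B) \<or> (\<exists>j<L. f = uform j)"
      unfolding P_def by auto
    then show "evf L f x > 0"
    proof
      assume "\<exists>A B. f = dform A B \<and> A \<in> Pw \<and> B \<in> Pw \<and> S x A > S x B"
      then obtain A B where AB: "f = dform A B" "A \<in> Pw" "B \<in> Pw" "S x A > S x B" by blast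
      then have "A \<subseteq> {0..<L}" "B \<subseteq> {0..<L}" by (auto simp: Pw_def)
      from evf_dform[OF this, of x] show "evf L f x > 0" using AB by (simp add: S_def)
    next
      assume "\<exists>j<L. f = uform j"
      then obtain j where j: "j < L" "f = uform j" by blast
      have "x j > 0" using pos j(1) unfolding x_def L_def by simp
      then show "evf L f x > 0" using evf_uform[OF j(1)] j(2) by simp
    qed
  qed
  have "\<exists>y. (\<forall>i. y i \<in> \<rat>) \<and> (\<forall>f\<in>E. evf L f y = 0) \<and> (\<forall>f\<in>P. evf L f y > 0)"
    by (rule main_approx[OF finE finP ratE xE xP])
  then obtain y where y: "\<forall>i. y i \<in> \<rat>" "\<forall>f\<in>E. evf L f y = 0" "\<forall>f\<in>P. evf L f y > 0" by blast
  have ypos: "y i > 0" if "i < L" for i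
  proof -
    have "uform i \<in> P" unfolding P_def using that by auto
    then show ?thesis using y(3) evf_uform[OF that, of y] by auto
  qed
  have yeq: "(S x A = S x B) = (S y A = S y B)" if "A \<in> Pw" "B \<in> Pw" for A B
  proof -
    have AB: "A \<subseteq> {0..<L}" "B \<subseteq> {0..<L}" using that by (auto simp: Pw_def)
    consider "S x A = S x B" | "S x A > S x B" | "S x B > S x A" by linarith
    then show ?thesis
    proof cases
      case 1
      then have "dform A B \<in> E" unfolding E_def using that by auto
      then show ?thesis using y(2) evf_dform[OF AB, of y] 1 by (auto simp: S_def)
    next
      case 2
      then have "dform A B \<in> P" unfolding P_def using that by auto
      then show ?thesis using y(3) evf_dform[OF AB, of y] 2 by (auto simp: S_def)
    next
      case 3
      then have "dform B A \<in> P" unfolding P_def using that by auto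
      then show ?thesis using y(3) evf_dform[OF AB(2,1), of y] 3 by (auto simp: S_def)
    qed
  qed
  obtain D :: nat where D: "D > 0" "\<forall>i<L. real D * y i \<in> \<int>"
    using common_denom[of L y] y(1) by auto
  define ns where "ns = map (\<lambda>i. nat \<lfloor>real D * y i\<rfloor>) [0..<L]"
  have nsi: "real (ns ! i) = real D * y i" if "i < L" for i
  proof -
    have "real D * y i \<in> \<int>" using D(2) that by auto
    then obtain k where k: "real D * y i = of_int k" by (rule Ints_cases)
    have "real D * y i > 0" using ypos[OF that] D(1) by simp
    then have "k > 0" using k by simp
    then show ?thesis using k that by (simp add: ns_def)
  qed
  have lenns: "length ns = L" by (simp add: ns_def)
  have "\<forall>n\<in>set ns. n > 0"
  proof
    fix n assume "n \<in> set ns"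
    then obtain i where i: "i < L" "n = ns ! i" using lenns by (auto simp: in_set_conv_nth)
    have "real n > 0" using nsi[OF i(1)] ypos[OF i(1)] D(1) i(2) by simp
    then show "n > 0" by simp
  qed
  moreover have "M = cardinal_range (map real ns)"
    unfolding M
  proof (rule range_eq)
    show "length xs = length (map real ns)" using lenns L_def by simp
    fix A B assume A: "A \<subseteq> {0..<length xs}" and B: "B \<subseteq> {0..<length xs}"
    have sz: "(\<Sum>n\<in>C. map real ns ! n) = real D * S y C" if "C \<subseteq> {0..<L}" for C
    proof -
      have "(\<Sum>n\<in>C. map real ns ! n) = (\<Sum>n\<in>C. real D * y n)"
        using that lenns nsi by (intro sum.cong) auto
      then show ?thesis by (simp add: S_def sum_distrib_left)
    qed
    have "((\<Sum>n\<in>A. xs ! n) = (\<Sum>n\<in>B. xs ! n)) = (S x A = S x B)" by (simp add: S_def x_def)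
    also have "\<dots> = (S y A = S y B)" using yeq A B by (simp add: Pw_def L_def)
    also have "\<dots> = (real D * S y A = real D * S y B)" using D(1) by simp
    also have "\<dots> = ((\<Sum>n\<in>A. map real ns ! n) = (\<Sum>n\<in>B. map real ns ! n))"
      using sz A B L_def by simp
    finally show "((\<Sum>n\<in>A. xs ! n) = (\<Sum>n\<in>B. xs ! n)) = ((\<Sum>n\<in>A. map real ns ! n) = (\<Sum>n\<in>B. map real ns ! n))" .
  qed
  ultimately show ?thesis by blast
qed

end
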